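(* Let $n,k$ be positive integers and $i\in\{1,\ldots,n\}$ such that $k\cdot\frac{i}{n}\cdot \frac{n-i}{n}< 1$, $n\ge 8k$, and $i<n/2$. If $H\sim\text{Hyp}(n,i,k)$, then $\mathbb{P}(H \ge ik/n) \ge \frac{k}{n}$.
   Context: $\text{Hyp}(n,i,k)$ denotes the hypergeometric distribution: the number of black marbles in a sample without replacement of size $k$ from an urn with $i$ black and $n-i$ white marbles, i.e. $\mathbb{P}(H=j)=\binom{i}{j}\binom{n-i}{k-j}/\binom{n}{k}$. *)

theory Defs
  imports Complex_Main
begin

text \<open>Hypergeometric distribution Hyp(n,i,k): probability that a sample without
replacement of size k from an urn with i black and n-i white marbles contains
exactly j black marbles.\<close>
definition hyp_pmf :: "nat \<Rightarrow> nat \<Rightarrow> nat \<Rightarrow> nat \<Rightarrow> real" where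
  "hyp_pmf n i k j = real ((i choose j) * ((n - i) choose (k - j))) / real (n choose k)"

definition hyp_tail :: "nat \<Rightarrow> nat \<Rightarrow> nat \<Rightarrow> real \<Rightarrow> real" where
  "hyp_tail n i k t = (\<Sum>j\<in>{j\<in>{0..k}. real j \<ge> t}. hyp_pmf n i k j)"

end

theory Submission
  imports Defs
begin

lemma choose_ratio: "(m choose Suc r) * Suc r = (m choose r) * (m - r)"
proof (cases m)
  case 0 then show ?thesis by simp
next
  case (Suc p)
  have "Suc r * (Suc p choose Suc r) = Suc p * (p choose r)" by (rule Suc_times_binomial)
  moreover have "(Suc p - r) * (Suc p choose r) = Suc p * ((Suc p - 1) choose r)"
    by (rule binomial_absorb_comp)
  ultimately show ?thesis using Suc by (simp add: mult.commute)
qed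

theorem lemma9:
  fixes n k i :: nat
  assumes "n > 0" and "k > 0"
    and "1 \<le> i" and "i \<le> n"
    and "real k * (real i / real n) * (real (n - i) / real n) < 1"
    and "n \<ge> 8 * k"
    and "real i < real n / 2"
  shows "hyp_tail n i k (real i * real k / real n) \<ge> real k / real n"
proof -
  define a where "a j = (i choose j) * ((n - i) choose (k - j))" for j
  define m where "m = n - i"
  have a_def': "a j = (i choose j) * (m choose (k - j))" for j by (simp add: a_def m_def)
  have tot: "(\<Sum>j\<le>k. a j) = n choose k"
    using vandermonde[where r=k and m=i and n="n - i"] assms(4) by (simp add: a_def)
  have Cpos: "n choose k > 0" using assms(6) by simp
  define mu where "mu = real i * real k / real n"
  have mupos: "mu > 0" using assms by (simp add: mu_def)
  have half: "real (n - i) / real n > 1/2" using assms(4,7,1) by (simp add: of_nat_diff field_simps)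
  have mu2: "mu < 2"
  proof -
    have "mu * (real (n - i) / real n) < 1" using assms(5) by (simp add: mu_def field_simps)
    moreover have "mu * (1/2) \<le> mu * (real (n - i) / real n)" by (meson half less_imp_le mult_left_mono mupos)
    ultimately show ?thesis by linarith
  qed
  have tail: "hyp_tail n i k mu = real (\<Sum>j\<in>{j\<in>{0..k}. real j \<ge> mu}. a j) / real (n choose k)"
    unfolding hyp_tail_def hyp_pmf_def a_def by (simp add: sum_divide_distrib)
  have kn: "real k / real n = real ((n - 1) choose (k - 1)) / real (n choose k)"
  proof -
    have "k * (n choose k) = n * ((n - 1) choose (k - 1))" using times_binomial_minus1_eq assms(2) by blast
    hence "real k * real (n choose k) = real n * real ((n - 1) choose (k - 1))" by (metis of_nat_mult)
    thus ?thesis using Cpos assms(1) by (simp add: field_simps)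
  qed
  show ?thesis
  proof (cases "mu \<le> 1")
    case True
    have sub: "{1..k} \<subseteq> {j\<in>{0..k}. real j \<ge> mu}" using True by auto
    have "(\<Sum>j\<in>{1..k}. a j) \<le> (\<Sum>j\<in>{j\<in>{0..k}. real j \<ge> mu}. a j)"
      by (rule sum_mono2[OF _ sub]) auto
    moreover have "(\<Sum>j\<le>k. a j) = a 0 + (\<Sum>j\<in>{1..k}. a j)"
      by (simp add: atMost_atLeast0 sum.atLeast_Suc_atMost)
    moreover have "a 0 = (n - i) choose k" by (simp add: a_def)
    moreover have "(n - i) choose k \<le> (n - 1) choose k" using assms(3) by (intro binomial_right_mono) simp
    moreover have "n choose k = ((n - 1) choose k) + ((n - 1) choose (k - 1))"
    proof -
      have "Suc (n-1) choose Suc (k-1) = ((n-1) choose (k-1)) + ((n-1) choose Suc (k-1))"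
        by (rule binomial_Suc_Suc)
      thus ?thesis using assms(1,2) by simp
    qed
    ultimately have "(n - 1) choose (k - 1) \<le> (\<Sum>j\<in>{j\<in>{0..k}. real j \<ge> mu}. a j)"
      using tot by linarith
    hence "real ((n - 1) choose (k - 1)) / real (n choose k) \<le> real (\<Sum>j\<in>{j\<in>{0..k}. real j \<ge> mu}. a j) / real (n choose k)"
      using Cpos by (intro divide_right_mono of_nat_mono) auto
    thus ?thesis using tail kn by (simp add: mu_def)
  next
    case False
    have ikn: "i * k > n"
    proof -
      have "real i * real k > real n" using False assms(1) by (simp add: mu_def field_simps)
      thus ?thesis by (metis of_nat_less_iff of_nat_mult)
    qed
    have i9: "i \<ge> 9"
    proof (rule ccontr)
      assume "\<not> 9 \<le> i" hence "i \<le> 8" by simp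
      hence "i * k \<le> 8 * k" by simp
      thus False using ikn assms(6) by linarith
    qed
    have k3: "k \<ge> 3"
    proof (rule ccontr)
      assume "\<not> 3 \<le> k" hence "k \<le> 2" by simp
      hence "i * k \<le> i * 2" by simp
      moreover have "2 * i < n" using assms(7) by linarith
      ultimately show False using ikn by linarith
    qed
    have sub: "{2..k} \<subseteq> {j\<in>{0..k}. real j \<ge> mu}" using mu2 by auto
    define R where "R = (\<Sum>j\<in>{2..k}. a j)"
    have R_le: "R \<le> (\<Sum>j\<in>{j\<in>{0..k}. real j \<ge> mu}. a j)"
      unfolding R_def by (rule sum_mono2[OF _ sub]) auto
    have split: "(\<Sum>j\<le>k. a j) = a 0 + a 1 + R"
    proof -
      have e1: "(\<Sum>j\<le>k. a j) = a 0 + (\<Sum>j\<in>{1..k}. a j)"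
        by (simp add: atMost_atLeast0 sum.atLeast_Suc_atMost)
      have "(\<Sum>j\<in>{1..k}. a j) = a 1 + (\<Sum>j\<in>{Suc 1..k}. a j)"
        using k3 by (intro sum.atLeast_Suc_atMost) simp
      hence "(\<Sum>j\<in>{1..k}. a j) = a 1 + R" by (simp add: R_def numeral_2_eq_2)
      thus ?thesis using e1 by simp
    qed
    have a2R: "a 2 \<le> R" unfolding R_def using k3
      by (intro member_le_sum) auto
    have r1: "(m choose k) * k = (m choose (k - 1)) * (m - (k - 1))"
      using choose_ratio[of m "k - 1"] assms(2) by simp
    have r2: "(m choose (k - 1)) * (k - 1) = (m choose (k - 2)) * (m - (k - 2))"
      using choose_ratio[of m "k - 2"] k3 by (simp add: Suc_diff_Suc numeral_2_eq_2)
    have a0: "a 0 = m choose k" by (simp add: a_def')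
    have a1: "a 1 = i * (m choose (k - 1))" by (simp add: a_def')
    have a2: "2 * a 2 = i * (i - 1) * (m choose (k - 2))"
    proof -
      have "(i choose Suc 1) * Suc 1 = (i choose 1) * (i - 1)" by (rule choose_ratio)
      hence "2 * (i choose 2) = i * (i - 1)" by (simp add: mult.commute numeral_2_eq_2)
      thus ?thesis by (simp add: a_def')
    qed
    have mn: "m - (k - 1) \<le> n" "m - (k - 2) \<le> n" by (simp_all add: m_def)
    have "a 0 * k \<le> a 1 * k"
    proof -
      have "a 0 * k = (m choose (k - 1)) * (m - (k - 1))" using a0 r1 by simp
      also have "\<dots> \<le> (m choose (k - 1)) * (i * k)" using mn ikn by (intro mult_left_mono) simp_all
      also have "\<dots> = a 1 * k" using a1 by simp
      finally show ?thesis .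
    qed
    hence a01: "a 0 \<le> a 1" using assms(2) by simp
    have key: "16 * n \<le> 27 * ((i - 1) * (k - 1))"
    proof -
      obtain p q where p: "i = p + 9" and q: "k = q + 3" using i9 k3 by (metis add.commute le_Suc_ex)
      have "16 * n \<le> 16 * (i * k)" using ikn by simp
      also have "\<dots> \<le> 27 * ((i - 1) * (k - 1))" unfolding p q by (simp add: algebra_simps)
      finally show ?thesis .
    qed
    have "8 * a 1 * (k - 1) \<le> 27 * a 2 * (k - 1)"
    proof -
      have "16 * (a 1 * (k - 1)) = i * (m choose (k - 2)) * (16 * (m - (k - 2)))"
        using a1 r2 by (simp add: algebra_simps)
      also have "\<dots> \<le> i * (m choose (k - 2)) * (27 * ((i - 1) * (k - 1)))"
        using key mn by (intro mult_left_mono) simp_all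
      also have "\<dots> = 27 * (i * (i - 1) * (m choose (k - 2))) * (k - 1)"
        by (simp only: mult.assoc mult.commute mult.left_commute)
      also have "\<dots> = 27 * (2 * a 2) * (k - 1)" by (simp only: a2)
      finally show ?thesis by simp
    qed
    hence a12: "8 * a 1 \<le> 27 * a 2" using k3 by simp
    have "4 * (n choose k) \<le> 31 * R" using split tot a01 a12 a2R by linarith
    hence "4 * real (n choose k) \<le> 31 * real R" by (metis of_nat_le_iff of_nat_mult of_nat_numeral)
    hence h1: "4/31 \<le> real R / real (n choose k)" using Cpos by (simp add: field_simps)
    have "real (8 * k) \<le> real n" using assms(6) by (metis of_nat_le_iff)
    hence "real k / real n \<le> 1/8" using assms(1) by (simp add: field_simps)
    hence "real k / real n \<le> real R / real (n choose k)" using h1 by linarith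
    also have "\<dots> \<le> real (\<Sum>j\<in>{j\<in>{0..k}. real j \<ge> mu}. a j) / real (n choose k)"
      using R_le Cpos by (intro divide_right_mono of_nat_mono) auto
    finally show ?thesis using tail by (simp add: mu_def)
  qed
qed

end
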